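(* Let $k\in\mathbb{Z}$, let $n$ be a positive integer and let $m$ be an odd positive integer. Then $$E_{n-1}^{(k)}(x)=\sum_{l=0}^{n-1}\binom{n-1}{l}m^{l}\sum_{j=1}^{n-l}\sum_{s=0}^{m-1}(-1)^sE_{l}\Big(\frac{s+x}{m}\Big)\frac{1}{j^{k-1}}\frac{S_{1}(n-l,j)}{n-l}.$$
   Context: Euler polynomials $E_n(x)$ are defined by $\frac{2}{e^t+1}e^{xt}=\sum_{n=0}^{\infty}E_n(x)\frac{t^n}{n!}$. For $k\in\mathbb{Z}$, $\mathrm{Ei}_k(x)=\sum_{n=1}^{\infty}\frac{x^n}{n^k(n-1)!}$; the poly-Genocchi polynomials $G_n^{(k)}(x)$ are defined by $\frac{2\,\mathrm{Ei}_k(\log(1+t))}{e^t+1}e^{xt}=\sum_{n=0}^{\infty}G_n^{(k)}(x)\frac{t^n}{n!}$, and the poly-Euler polynomials are $E_n^{(k)}(x)=\frac{G_{n+1}^{(k)}(x)}{n+1}$ ($n\ge0$). $S_1(n,m)$ are the signed Stirling numbers of the first kind: $\frac{(\log(1+t))^m}{m!}=\sum_{n=m}^{\infty}S_1(n,m)\frac{t^n}{n!}$. *)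

theory Defs
  imports Complex_Main "HOL-Computational_Algebra.Formal_Power_Series" "HOL-Combinatorics.Stirling"
begin

definition euler_poly :: "nat \<Rightarrow> real \<Rightarrow> real" where
  "euler_poly n x = fact n * fps_nth (fps_const 2 * fps_exp x / (fps_exp 1 + 1)) n"

definition Ei_fps :: "int \<Rightarrow> real fps" where
  "Ei_fps k = Abs_fps (\<lambda>n. if n = 0 then 0 else 1 / ((real n powi k) * fact (n - 1)))"

text \<open>fps_ln 1 is the formal power series of log(1+t).\<close>
definition poly_genocchi :: "int \<Rightarrow> nat \<Rightarrow> real \<Rightarrow> real" where
  "poly_genocchi k n x =
     fact n * fps_nth (fps_const 2 * (Ei_fps k oo fps_ln 1) * fps_exp x / (fps_exp 1 + 1)) n"

definition poly_euler :: "int \<Rightarrow> nat \<Rightarrow> real \<Rightarrow> real" where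
  "poly_euler k n x = poly_genocchi k (n + 1) x / real (n + 1)"

definition S1 :: "nat \<Rightarrow> nat \<Rightarrow> real" where
  "S1 n m = (-1) ^ (n - m) * real (stirling n m)"

end

theory Submission
  imports Defs
begin

unbundle fps_syntax

lemma S1_rec: "S1 (Suc N) (Suc j) = S1 N j - real N * S1 N (Suc j)"
proof (cases "j < N")
  case True
  then obtain d where d: "N - j = Suc d" "N - Suc j = d" by (metis Suc_diff_Suc diff_Suc_1 )
  show ?thesis unfolding S1_def using d by (simp add: algebra_simps)
next
  case False
  then show ?thesis unfolding S1_def
    by (cases "j = N") auto
qed

lemma S1_0: "S1 0 j = (if j = 0 then 1 else 0)"
  by (cases j) (auto simp: S1_def)

lemma S1_Suc0: "S1 (Suc N) 0 = 0"
  by (auto simp: S1_def)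

lemma ln_rec:
  fixes j N :: nat
  defines "L \<equiv> fps_ln (1::real)"
  shows "real (Suc N) * (L^Suc j) $ Suc N + real N * (L^Suc j) $ N = real (Suc j) * (L^j) $ N"
proof -
  define g where "g = fps_deriv (L^Suc j)"
  have inv: "(1 + fps_X) * inverse (1 + fps_X :: real fps) = 1"
    by (simp add: inverse_mult_eq_1')
  have "(1 + fps_X) * g = fps_const (real (Suc j)) * L^j"
  proof -
    have "(1 + fps_X) * g = fps_const (real (Suc j)) * ((1 + fps_X) * inverse (1 + fps_X)) * L^j"
      unfolding g_def fps_deriv_power L_def fps_ln_deriv by (simp add: mult_ac)
    then show ?thesis using inv by simp
  qed
  hence "((1 + fps_X) * g) $ N = real (Suc j) * (L^j) $ N" by simp
  moreover have "((1 + fps_X) * g) $ N = g $ N + (fps_X * g) $ N" by (simp add: algebra_simps)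
  moreover have "(fps_X * g) $ N = real N * (L^Suc j) $ N"
  proof -
    define h where "h = L^Suc j"
    have "(fps_X * fps_deriv h) $ N = real N * h $ N"
      by (cases N) (auto simp: fps_X_mult_nth)
    then show ?thesis unfolding g_def h_def .
  qed
  moreover have "g $ N = real (Suc N) * (L^Suc j) $ Suc N"
  proof -
    define h where "h = L^Suc j"
    have "fps_deriv h $ N = real (Suc N) * h $ Suc N" by simp
    then show ?thesis unfolding g_def h_def .
  qed
  ultimately show ?thesis by simp
qed

lemma alg:
  fixes a b c :: real
  assumes "real (Suc N) * a = real (Suc i) * b - real N * c"
    "b = fact i * S1 N i / fact N" "c = fact (Suc i) * S1 N (Suc i) / fact N"
  shows "a = fact (Suc i) * S1 (Suc N) (Suc i) / fact (Suc N)"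
proof -
  have "a = (real (Suc i) * b - real N * c) / real (Suc N)" using assms(1)
    by (simp add: field_simps)
  also have "\<dots> = fact (Suc i) * S1 (Suc N) (Suc i) / fact (Suc N)"
    unfolding assms(2,3) S1_rec fact_Suc[of i] fact_Suc[of N] of_nat_mult
    by (simp add: algebra_simps diff_divide_distrib)
  finally show ?thesis .
qed

lemma ln_pow: "(fps_ln (1::real) ^ j) $ N = fact j * S1 N j / fact N"
proof (induction N arbitrary: j)
  case 0
  then show ?case by (simp add: S1_0 fps_nth_power_0)
next
  case (Suc N)
  show ?case
  proof (cases j)
    case 0
    then show ?thesis by (simp add: S1_Suc0)
  next
    case (Suc i)
    have r: "real (Suc N) * (fps_ln 1 ^ Suc i) $ Suc N = real (Suc i) * (fps_ln (1::real) ^ i) $ N - real N * (fps_ln 1 ^ Suc i) $ N"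
      using ln_rec[of N i] by simp
    show ?thesis unfolding Suc by (rule alg[OF r Suc.IH[of i] Suc.IH[of "Suc i"]])
  qed
qed


definition EG :: "real \<Rightarrow> real fps" where
  "EG y = fps_const 2 * fps_exp y / (fps_exp 1 + 1)"

lemma euler_poly_EG: "euler_poly n x = fact n * EG x $ n"
  by (simp add: euler_poly_def EG_def)

lemma EG_mult: "EG y * (fps_exp 1 + 1) = fps_const 2 * fps_exp y"
  unfolding EG_def by (rule unit_div_mult_self) simp

definition Sc :: "real \<Rightarrow> real fps \<Rightarrow> real fps" where
  "Sc c f = f oo (fps_const c * fps_X)"

lemma Sc_mult: "Sc c (f * g) = Sc c f * Sc c g"
  unfolding Sc_def by (rule fps_compose_mult_distrib) simp

lemma Sc_nth: "Sc c f $ n = c ^ n * f $ n"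
  unfolding Sc_def fps_compose_linear by simp

lemma Sc_exp: "Sc c (fps_exp y) = fps_exp (c * y)"
  by (simp add: fps_eq_iff Sc_nth power_mult_distrib)

lemma Sc_const: "Sc c (fps_const a) = fps_const a"
  by (simp add: fps_eq_iff Sc_nth)

lemma Sc_add: "Sc c (f + g) = Sc c f + Sc c g"
  by (simp add: fps_eq_iff Sc_nth algebra_simps)

lemma Sc_EG: "Sc c (EG y) * (fps_exp c + 1) = fps_const 2 * fps_exp (c * y)"
proof -
  have "Sc c (EG y) * (fps_exp c + 1) = Sc c (EG y * (fps_exp 1 + 1))"
    using Sc_mult Sc_add Sc_exp[of c 1] Sc_const[of c 1] by simp
  also have "\<dots> = fps_const 2 * fps_exp (c * y)"
    unfolding EG_mult Sc_mult Sc_const Sc_exp ..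
  finally show ?thesis .
qed

lemma mult_formula_fps:
  fixes m :: nat and x :: real
  assumes "odd m" "m > 0"
  shows "(\<Sum>s<m. fps_const ((-1)^s) * Sc (real m) (EG ((real s + x) / real m))) = EG x"
proof -
  define q where "q = fps_exp (1::real)"
  define LH where "LH = (\<Sum>s<m. fps_const ((-1)^s) * Sc (real m) (EG ((real s + x) / real m)))"
  have em: "fps_exp (real m) = q ^ m" unfolding q_def by (simp add: fps_exp_power_mult)
  have es: "fps_exp (real s + x) = q ^ s * fps_exp x" for s :: nat
    unfolding q_def by (simp add: fps_exp_add_mult fps_exp_power_mult)
  have geo: "(\<Sum>s<m. (-q)^s) * (q + 1) = q ^ m + 1"
  proof -
    have "(-q)^m - 1 = (-q - 1) * (\<Sum>s<m. (-q)^s)" by (rule power_diff_1_eq)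
    moreover have "(-q)^m = - (q^m)" using assms(1) by (simp add: power_minus_odd)
    ultimately show ?thesis by (simp add: algebra_simps)
  qed
  have "LH * (q ^ m + 1) = (\<Sum>s<m. fps_const ((-1)^s) * (Sc (real m) (EG ((real s + x) / real m)) * (fps_exp (real m) + 1)))"
    unfolding LH_def em sum_distrib_right by (simp only: mult.assoc)
  also have "\<dots> = (\<Sum>s<m. fps_const ((-1)^s) * (fps_const 2 * (q ^ s * fps_exp x)))"
  proof (rule sum.cong[OF refl])
    fix s assume "s \<in> {..<m}"
    have mm: "real m * ((real s + x) / real m) = real s + x" using assms(2) by simp
    then show "fps_const ((-1)^s) * (Sc (real m) (EG ((real s + x) / real m)) * (fps_exp (real m) + 1)) =
      fps_const ((-1)^s) * (fps_const 2 * (q ^ s * fps_exp x))"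
      unfolding Sc_EG mm es by simp
  qed
  also have "\<dots> = fps_const 2 * fps_exp x * (\<Sum>s<m. (-q)^s)"
    unfolding sum_distrib_left
  proof (rule sum.cong[OF refl])
    fix s assume "s \<in> {..<m}"
    have "fps_const ((-1::real)^s) = (-1)^s" by (metis fps_const_neg fps_const_1_eq_1 fps_const_power)
    then show "fps_const ((-1)^s) * (fps_const 2 * (q ^ s * fps_exp x)) = fps_const 2 * fps_exp x * (-q)^s"
      unfolding power_minus[of q s] by (simp only: mult_ac)
  qed
  finally have 0: "LH * (q ^ m + 1) = fps_const 2 * fps_exp x * (\<Sum>s<m. (-q)^s)" .
  have "LH * ((q ^ m + 1) * (q + 1)) = (LH * (q ^ m + 1)) * (q + 1)" by (simp only: mult.assoc)
  also have "\<dots> = fps_const 2 * fps_exp x * ((\<Sum>s<m. (-q)^s) * (q + 1))" unfolding 0 by (simp only: mult.assoc)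
  finally have 1: "LH * ((q ^ m + 1) * (q + 1)) = fps_const 2 * fps_exp x * (q ^ m + 1)"
    unfolding geo .
  have e1: "EG x * (q + 1) = fps_const 2 * fps_exp x" using EG_mult[of x] unfolding q_def .
  have "EG x * ((q ^ m + 1) * (q + 1)) = (EG x * (q + 1)) * (q ^ m + 1)" by (simp only: mult_ac)
  then have 2: "EG x * ((q ^ m + 1) * (q + 1)) = fps_const 2 * fps_exp x * (q ^ m + 1)"
    unfolding e1 .
  have nz: "(q ^ m + 1) * (q + 1) \<noteq> 0"
  proof -
    have "((q ^ m + 1) * (q + 1)) $ 0 = 4" unfolding q_def by (simp add: fps_nth_power_0)
    then show ?thesis by (metis fps_zero_nth zero_neq_numeral)
  qed
  from 1 2 nz have "LH = EG x" using mult_right_cancel by metis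
  then show ?thesis unfolding LH_def .
qed

lemma mult_formula:
  fixes m :: nat and x :: real
  assumes "odd m" "m > 0"
  shows "euler_poly l x = real m ^ l * (\<Sum>s = 0..m-1. (-1)^s * euler_poly l ((real s + x) / real m))"
proof -
  have set: "{0..m-1} = {..<m}" using assms(2) by auto
  have "euler_poly l x = fact l * (\<Sum>s<m. fps_const ((-1)^s) * Sc (real m) (EG ((real s + x) / real m))) $ l"
    unfolding mult_formula_fps[OF assms] euler_poly_EG ..
  also have "\<dots> = real m ^ l * (\<Sum>s<m. (-1)^s * euler_poly l ((real s + x) / real m))"
    unfolding fps_sum_nth sum_distrib_left
  proof (rule sum.cong[OF refl])
    fix s assume "s \<in> {..<m}"
    show "fact l * (fps_const ((-1)^s) * Sc (real m) (EG ((real s + x) / real m))) $ l =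
      real m ^ l * ((-1)^s * euler_poly l ((real s + x) / real m))"
      unfolding fps_mult_left_const_nth Sc_nth euler_poly_EG by (simp only: mult_ac)
  qed
  finally show ?thesis unfolding set .
qed


definition cc :: "int \<Rightarrow> nat \<Rightarrow> real" where
  "cc k N = (\<Sum>j = 1..N. S1 N j / (real j powi (k - 1)))"

lemma comp_nth: "fact N * (Ei_fps k oo fps_ln 1) $ N = cc k N"
proof -
  have "fact N * (Ei_fps k oo fps_ln 1) $ N = (\<Sum>i = 0..N. fact N * (Ei_fps k $ i * (fps_ln 1 ^ i) $ N))"
    unfolding fps_compose_nth sum_distrib_left ..
  also have "\<dots> = (\<Sum>i = 0..N. Ei_fps k $ i * fact i * S1 N i)"
    by (rule sum.cong[OF refl]) (simp add: ln_pow)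
  also have "\<dots> = (\<Sum>i = 1..N. Ei_fps k $ i * fact i * S1 N i)"
    by (simp add: sum.atLeast_Suc_atMost Ei_fps_def)
  also have "\<dots> = cc k N" unfolding cc_def
  proof (rule sum.cong[OF refl])
    fix i assume "i \<in> {1..N}"
    then have i: "i > 0" by auto
    have p: "real i powi (k - 1) = real i powi k / real i"
      using power_int_diff[of "real i" k 1] i by simp
    have "Ei_fps k $ i * fact i = 1 / (real i powi k * fact (i - 1)) * (real i * fact (i - 1))"
      using i by (simp add: Ei_fps_def fact_reduce[OF i])
    also have "\<dots> = 1 / (real i powi (k - 1))" unfolding p using i by (simp add: field_simps)
    finally show "Ei_fps k $ i * fact i * S1 N i = S1 N i / (real i powi (k - 1))" by simp
  qed
  finally show ?thesis .
qed

lemma genocchi_sum: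
  "poly_genocchi k n x = (\<Sum>i = 0..n. real (n choose i) * cc k i * euler_poly (n - i) x)"
proof -
  define F where "F = Ei_fps k oo fps_ln 1"
  have D0: "(fps_exp (1::real) + 1) $ 0 \<noteq> 0" by simp
  have "fps_const 2 * F * fps_exp x / (fps_exp 1 + 1) = F * EG x"
    unfolding EG_def fps_divide_unit[OF D0] by (simp only: mult_ac)
  then have "poly_genocchi k n x = fact n * (F * EG x) $ n"
    unfolding poly_genocchi_def F_def by simp
  also have "\<dots> = (\<Sum>i = 0..n. fact n * (F $ i * EG x $ (n - i)))"
    unfolding fps_mult_nth sum_distrib_left ..
  also have "\<dots> = (\<Sum>i = 0..n. real (n choose i) * cc k i * euler_poly (n - i) x)"
  proof (rule sum.cong[OF refl])
    fix i assume "i \<in> {0..n}"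
    then have i: "i \<le> n" by auto
    show "fact n * (F $ i * EG x $ (n - i)) = real (n choose i) * cc k i * euler_poly (n - i) x"
      unfolding binomial_fact[OF i] comp_nth[symmetric] euler_poly_EG F_def
      by (simp add: field_simps)
  qed
  finally show ?thesis .
qed


lemma alg2:
  fixes A B c d N e :: real
  assumes "d * A = N * B" "d \<noteq> 0" "N \<noteq> 0"
  shows "A * c * e / N = B * e * (c / d)"
proof -
  have "A = N * B / d" using assms by (simp add: field_simps)
  then show ?thesis using assms by (simp add: field_simps)
qed

theorem corollary7:
  fixes k :: int and n m :: nat and x :: real
  assumes "n > 0" and "odd m" and "m > 0"
  shows "poly_euler k (n - 1) x =
    (\<Sum>l = 0..n - 1. real (n - 1 choose l) * real m ^ l *
      (\<Sum>j = 1..n - l. \<Sum>s = 0..m - 1.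
         (-1) ^ s * euler_poly l ((real s + x) / real m) * (1 / (real j powi (k - 1)))
         * (S1 (n - l) j / real (n - l))))"
proof -
  obtain n' where n: "n = Suc n'" using assms(1) by (cases n) auto
  define g where "g i = real (n choose i) * cc k i * euler_poly (n - i) x / real n" for i
  have "poly_euler k (n - 1) x = poly_genocchi k n x / real n"
    unfolding poly_euler_def using n by simp
  also have "\<dots> = (\<Sum>i = 0..n. g i)"
    unfolding genocchi_sum g_def sum_divide_distrib ..
  also have "\<dots> = (\<Sum>l = 0..n. g (n - l))"
    using sum.atLeastAtMost_rev[of g 0 n] by simp
  also have "\<dots> = (\<Sum>l = 0..n'. g (n - l))"
    unfolding n sum.atLeast0_atMost_Suc by (simp add: g_def cc_def)
  also have "\<dots> = (\<Sum>l = 0..n - 1. real (n - 1 choose l) * real m ^ l *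
      (\<Sum>j = 1..n - l. \<Sum>s = 0..m - 1.
         (-1) ^ s * euler_poly l ((real s + x) / real m) * (1 / (real j powi (k - 1)))
         * (S1 (n - l) j / real (n - l))))"
    unfolding n diff_Suc_1
  proof (rule sum.cong[OF refl])
    fix l assume "l \<in> {0..n'}"
    then have l: "l \<le> n'" by auto
    have inner: "(\<Sum>j = 1..Suc n' - l. \<Sum>s = 0..m - 1.
         (-1) ^ s * euler_poly l ((real s + x) / real m) * (1 / (real j powi (k - 1)))
         * (S1 (Suc n' - l) j / real (Suc n' - l)))
       = (\<Sum>s = 0..m - 1. (-1) ^ s * euler_poly l ((real s + x) / real m)) *
         (cc k (Suc n' - l) / real (Suc n' - l))"
      unfolding cc_def sum_divide_distrib sum_distrib_left sum_distrib_right
      by (intro sum.cong refl) simp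
    have b1: "real (Suc n' choose (Suc n' - l)) = real (Suc n' choose l)"
      using binomial_symmetric[of l "Suc n'"] l by simp
    have b2: "real (Suc n' - l) * real (Suc n' choose l) = real (Suc n') * real (n' choose l)"
      using binomial_absorb_comp[of "Suc n'" l] by (metis diff_Suc_1 of_nat_mult)
    have nz: "real (Suc n' - l) \<noteq> 0" using l by simp
    have "g (Suc n' - l) = real (Suc n' choose l) * cc k (Suc n' - l) * euler_poly l x / real (Suc n')"
      unfolding g_def n b1 using l by simp
    also have "\<dots> = real (n' choose l) * euler_poly l x * (cc k (Suc n' - l) / real (Suc n' - l))"
      by (rule alg2[OF b2 nz]) simp
    also have "\<dots> = real (n' choose l) * real m ^ l *
      (\<Sum>j = 1..Suc n' - l. \<Sum>s = 0..m - 1.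
         (-1) ^ s * euler_poly l ((real s + x) / real m) * (1 / (real j powi (k - 1)))
         * (S1 (Suc n' - l) j / real (Suc n' - l)))"
      unfolding inner mult_formula[OF assms(2,3), of l x] by (simp only: mult_ac)
    finally show "g (Suc n' - l) = real (n' choose l) * real m ^ l *
      (\<Sum>j = 1..Suc n' - l. \<Sum>s = 0..m - 1.
         (-1) ^ s * euler_poly l ((real s + x) / real m) * (1 / (real j powi (k - 1)))
         * (S1 (Suc n' - l) j / real (Suc n' - l)))" using n by simp
  qed
  finally show ?thesis .
qed

end
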